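(* Let $\mathcal X$ be a finite alphabet and $P_0,P_1,\hat P_0,\hat P_1$ distributions on $\mathcal X$ with full support. Observations $\mathbf x\in\mathcal X^n$ are i.i.d. from $P_0$ or $P_1$, and for a threshold $\hat\gamma$ (possibly depending on $n$) the mismatched likelihood ratio test decides hypothesis $1$ iff $D(\hat T\|\hat P_0)-D(\hat T\|\hat P_1)\ge\hat\gamma$, where $\hat T$ is the type of $\mathbf x$; $\epsilon_0$ (resp. $\epsilon_1$) is the probability under $P_0^n$ (resp. $P_1^n$) of deciding $1$ (resp. $0$). Fix $\epsilon\in(0,\tfrac12)$ and define the mismatched Stein exponent $\hat E_1^{(\epsilon)}$ as the supremum, over threshold sequences $(\hat\gamma_n)$ with $\limsup_{n\to\infty}\epsilon_0\le\epsilon$, of $\liminf_{n\to\infty}-\frac1n\log\epsilon_1$. Let $\gamma^*=D(P_0\|\hat P_0)-D(P_0\|\hat P_1)$ and $\hat{\mathcal Q}_1=\{Q\in\mathcal P(\mathcal X):D(Q\|\hat P_0)-D(Q\|\hat P_1)\le\gamma^*\}$. Then $$\hat E_1^{(\epsilon)}=\min_{Q\in\hat{\mathcal Q}_1}D(Q\|P_1),$$ and this is achieved by the threshold $$\hat\gamma_n=D(P_0\|\hat P_0)-D(P_0\|\hat P_1)+\sqrt{\frac{V(P_0,\hat P_0,\hat P_1)}{n}}\,\mathsf Q^{-1}(\epsilon),$$ where $V(P_0,\hat P_0,\hat P_1)=\mathrm{Var}_{P_0}\big[\log\frac{\hat P_0(X)}{\hat P_1(X)}\big]$ with $X\sim P_0$,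 and $\mathsf Q^{-1}$ is the inverse of the Gaussian tail function $\mathsf Q(t)=\Pr[Z>t]$, $Z\sim\mathcal N(0,1)$.
   Context: $D(\cdot\|\cdot)$ is relative entropy; $\mathcal P(\mathcal X)$ is the probability simplex; the type $\hat T$ of $\mathbf x$ is its empirical distribution. *)

theory Defs
  imports "HOL-Probability.Probability"
begin

definition is_dist :: "('a::finite \<Rightarrow> real) \<Rightarrow> bool" where
  "is_dist P \<longleftrightarrow> (\<forall>x. 0 \<le> P x) \<and> (\<Sum>x\<in>UNIV. P x) = 1"

definition full_dist :: "('a::finite \<Rightarrow> real) \<Rightarrow> bool" where
  "full_dist P \<longleftrightarrow> is_dist P \<and> (\<forall>x. 0 < P x)"

definition prob_simplex :: "('a::finite \<Rightarrow> real) set" where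
  "prob_simplex = {Q. is_dist Q}"

definition KL :: "('a::finite \<Rightarrow> real) \<Rightarrow> ('a \<Rightarrow> real) \<Rightarrow> real" where
  "KL Q P = (\<Sum>x\<in>UNIV. if Q x = 0 then 0 else Q x * ln (Q x / P x))"

definition type_of :: "'a list \<Rightarrow> 'a \<Rightarrow> real" where
  "type_of xs a = real (count_list xs a) / real (length xs)"

definition decide1 :: "('a::finite \<Rightarrow> real) \<Rightarrow> ('a \<Rightarrow> real) \<Rightarrow> real \<Rightarrow> 'a list \<Rightarrow> bool" where
  "decide1 Ph0 Ph1 g xs \<longleftrightarrow> KL (type_of xs) Ph0 - KL (type_of xs) Ph1 \<ge> g"

definition seq_prob :: "('a::finite \<Rightarrow> real) \<Rightarrow> nat \<Rightarrow> ('a list \<Rightarrow> bool) \<Rightarrow> real" where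
  "seq_prob P n A = (\<Sum>xs\<in>{xs. length xs = n \<and> A xs}. prod_list (map P xs))"

definition eps0 :: "('a::finite \<Rightarrow> real) \<Rightarrow> ('a \<Rightarrow> real) \<Rightarrow> ('a \<Rightarrow> real) \<Rightarrow> nat \<Rightarrow> real \<Rightarrow> real" where
  "eps0 P0 Ph0 Ph1 n g = seq_prob P0 n (decide1 Ph0 Ph1 g)"

definition eps1 :: "('a::finite \<Rightarrow> real) \<Rightarrow> ('a \<Rightarrow> real) \<Rightarrow> ('a \<Rightarrow> real) \<Rightarrow> nat \<Rightarrow> real \<Rightarrow> real" where
  "eps1 P1 Ph0 Ph1 n g = seq_prob P1 n (\<lambda>xs. \<not> decide1 Ph0 Ph1 g xs)"

definition neglog_rate :: "nat \<Rightarrow> real \<Rightarrow> ereal" where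
  "neglog_rate n p = (if p = 0 then \<infinity> else ereal (- ln p / real n))"

definition admissible :: "('a::finite \<Rightarrow> real) \<Rightarrow> ('a \<Rightarrow> real) \<Rightarrow> ('a \<Rightarrow> real) \<Rightarrow> real \<Rightarrow> (nat \<Rightarrow> real) \<Rightarrow> bool" where
  "admissible P0 Ph0 Ph1 \<epsilon> gs \<longleftrightarrow> limsup (\<lambda>n. ereal (eps0 P0 Ph0 Ph1 n (gs n))) \<le> ereal \<epsilon>"

definition exponent1 :: "('a::finite \<Rightarrow> real) \<Rightarrow> ('a \<Rightarrow> real) \<Rightarrow> ('a \<Rightarrow> real) \<Rightarrow> (nat \<Rightarrow> real) \<Rightarrow> ereal" where
  "exponent1 P1 Ph0 Ph1 gs = liminf (\<lambda>n. neglog_rate n (eps1 P1 Ph0 Ph1 n (gs n)))"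

definition stein_exp :: "('a::finite \<Rightarrow> real) \<Rightarrow> ('a \<Rightarrow> real) \<Rightarrow> ('a \<Rightarrow> real) \<Rightarrow> ('a \<Rightarrow> real) \<Rightarrow> real \<Rightarrow> ereal" where
  "stein_exp P0 P1 Ph0 Ph1 \<epsilon> =
     (SUP gs \<in> {gs. admissible P0 Ph0 Ph1 \<epsilon> gs}. exponent1 P1 Ph0 Ph1 gs)"

definition gauss_tail :: "real \<Rightarrow> real" where
  "gauss_tail t = measure (density lborel std_normal_density) {t<..}"

definition gauss_tail_inv :: "real \<Rightarrow> real" where
  "gauss_tail_inv e = (THE t. gauss_tail t = e)"

definition mism_var :: "('a::finite \<Rightarrow> real) \<Rightarrow> ('a \<Rightarrow> real) \<Rightarrow> ('a \<Rightarrow> real) \<Rightarrow> real" where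
  "mism_var P0 Ph0 Ph1 =
     (let f = (\<lambda>x. ln (Ph0 x / Ph1 x)); m = (\<Sum>x\<in>UNIV. P0 x * f x)
      in (\<Sum>x\<in>UNIV. P0 x * (f x - m)\<^sup>2))"

end

theory Submission
  imports Defs
begin

definition Elist :: "('a::finite \<Rightarrow> real) \<Rightarrow> nat \<Rightarrow> ('a list \<Rightarrow> real) \<Rightarrow> real" where
  "Elist P n F = (\<Sum>xs\<in>{xs. length xs = n}. prod_list (map P xs) * F xs)"

lemma finite_lists_len[simp]: "finite {xs::'a::finite list. length xs = n}"
  using finite_lists_length_eq[of "UNIV::'a set" n] by simp

lemma lists_Suc: "{xs::'a list. length xs = Suc n} = (\<lambda>(x,xs). x#xs) ` (UNIV \<times> {xs. length xs = n})"
  by (auto simp: length_Suc_conv image_iff)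

lemma Elist_0[simp]: "Elist P 0 F = F []"
  by (simp add: Elist_def)

lemma Elist_Suc: "Elist P (Suc n) F = (\<Sum>x\<in>UNIV. P x * Elist P n (\<lambda>xs. F (x#xs)))"
proof -
  have inj: "inj_on (\<lambda>(x,xs). x#xs) (UNIV \<times> {xs::'a list. length xs = n})"
    by (auto simp: inj_on_def)
  have "Elist P (Suc n) F = (\<Sum>(x,xs)\<in>UNIV \<times> {xs. length xs = n}. prod_list (map P (x#xs)) * F (x#xs))"
    unfolding Elist_def lists_Suc by (subst sum.reindex[OF inj]) (simp add: case_prod_unfold)
  also have "\<dots> = (\<Sum>x\<in>UNIV. \<Sum>xs\<in>{xs. length xs = n}. P x * (prod_list (map P xs) * F (x#xs)))"
    by (subst sum.cartesian_product[symmetric]) (simp add: mult.assoc)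
  also have "\<dots> = (\<Sum>x\<in>UNIV. P x * Elist P n (\<lambda>xs. F (x#xs)))"
    by (simp add: Elist_def sum_distrib_left)
  finally show ?thesis .
qed

lemma Elist_add: "Elist P n (\<lambda>xs. F xs + G xs) = Elist P n F + Elist P n G"
  by (simp add: Elist_def distrib_left sum.distrib)

lemma Elist_cmult: "Elist P n (\<lambda>xs. c * F xs) = c * Elist P n F"
  by (simp add: Elist_def sum_distrib_left ac_simps)

lemma Elist_mono:
  assumes "\<And>x. 0 \<le> P x" "\<And>xs. length xs = n \<Longrightarrow> F xs \<le> G xs"
  shows "Elist P n F \<le> Elist P n G"
  unfolding Elist_def
  by (rule sum_mono) (auto intro!: mult_left_mono prod_list_nonneg assms)

lemma Elist_nonneg:
  assumes "\<And>x. 0 \<le> P x" "\<And>xs. length xs = n \<Longrightarrow> 0 \<le> F xs"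
  shows "0 \<le> Elist P n F"
  using Elist_mono[of P n "\<lambda>_. 0" F] assms by (simp add: Elist_def)

lemma Elist_prod: "Elist P n (\<lambda>xs. prod_list (map h xs)) = (\<Sum>x\<in>UNIV. P x * h x)^n"
proof (induction n)
  case (Suc n)
  then show ?case
    by (simp add: Elist_Suc Elist_cmult sum_distrib_right ac_simps)
qed simp

lemma Elist_const:
  assumes "is_dist P" shows "Elist P n (\<lambda>_. c) = c"
proof -
  have [simp]: "prod_list (map (\<lambda>_. 1::real) xs) = 1" for xs :: "'a list" by (induct xs) auto
  have "Elist P n (\<lambda>_. c) = Elist P n (\<lambda>xs. prod_list (map (\<lambda>_. 1) xs)) * c"
    unfolding Elist_def by (simp add: sum_distrib_right)
  also have "\<dots> = c" unfolding Elist_prod using assms by (simp add: is_dist_def)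
  finally show ?thesis .
qed

lemma Elist_sum:
  assumes "is_dist P" "(\<Sum>x\<in>UNIV. P x * c x) = 0"
  shows "Elist P n (\<lambda>xs. sum_list (map c xs)) = 0"
proof (induction n)
  case (Suc n)
  have "Elist P (Suc n) (\<lambda>xs. sum_list (map c xs)) = (\<Sum>x\<in>UNIV. P x * (c x + Elist P n (\<lambda>xs. sum_list (map c xs))))"
    by (simp add: Elist_Suc Elist_add Elist_const[OF assms(1)])
  also have "\<dots> = 0" using Suc assms by simp
  finally show ?case .
qed simp

lemma Elist_sq:
  assumes "is_dist P" "(\<Sum>x\<in>UNIV. P x * c x) = 0"
  shows "Elist P n (\<lambda>xs. (sum_list (map c xs))\<^sup>2) = real n * (\<Sum>x\<in>UNIV. P x * (c x)\<^sup>2)"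
proof (induction n)
  case (Suc n)
  have e: "(c x + s)\<^sup>2 = (c x)\<^sup>2 + 2 * c x * s + s\<^sup>2" for x s by (simp add: power2_eq_square algebra_simps)
  have "Elist P (Suc n) (\<lambda>xs. (sum_list (map c xs))\<^sup>2) =
     (\<Sum>x\<in>UNIV. P x * ((c x)\<^sup>2 + 2 * c x * Elist P n (\<lambda>xs. sum_list (map c xs)) + Elist P n (\<lambda>xs. (sum_list (map c xs))\<^sup>2)))"
    by (simp add: Elist_Suc e Elist_add Elist_cmult Elist_const[OF assms(1)])
  also have "\<dots> = (\<Sum>x\<in>UNIV. P x * (c x)\<^sup>2 + (real n * (\<Sum>x\<in>UNIV. P x * (c x)\<^sup>2)) * P x)"
    using Suc Elist_sum[OF assms] by (intro sum.cong refl) (simp add: algebra_simps)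
  also have "\<dots> = (\<Sum>x\<in>UNIV. P x * (c x)\<^sup>2) + real n * (\<Sum>x\<in>UNIV. P x * (c x)\<^sup>2) * (\<Sum>x\<in>UNIV. P x)"
    by (simp only: sum.distrib sum_distrib_left)
  also have "\<dots> = real (Suc n) * (\<Sum>x\<in>UNIV. P x * (c x)\<^sup>2)"
    using assms(1) by (simp add: is_dist_def algebra_simps)
  finally show ?case .
qed simp

lemma seq_prob_Elist: "seq_prob P n A = Elist P n (\<lambda>xs. if A xs then 1 else 0)"
  unfolding seq_prob_def Elist_def
  by (rule sum.mono_neutral_cong_left) auto

lemma seq_prob_mono:
  assumes "\<And>x. 0 \<le> P x" "\<And>xs. length xs = n \<Longrightarrow> A xs \<Longrightarrow> B xs"
  shows "seq_prob P n A \<le> seq_prob P n B"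
  unfolding seq_prob_Elist by (rule Elist_mono) (use assms in auto)

lemma seq_prob_le1:
  assumes "is_dist P" shows "seq_prob P n A \<le> 1"
  using Elist_mono[of P n "\<lambda>xs. if A xs then 1 else 0" "\<lambda>_. 1"] assms Elist_const[OF assms, of n 1]
  by (auto simp: seq_prob_Elist is_dist_def)

lemma seq_prob_nonneg:
  assumes "is_dist P" shows "0 \<le> seq_prob P n A"
  unfolding seq_prob_Elist by (rule Elist_nonneg) (use assms in \<open>auto simp: is_dist_def\<close>)

lemma seq_prob_compl:
  assumes "is_dist P" shows "seq_prob P n (\<lambda>xs. \<not> A xs) = 1 - seq_prob P n A"
proof -
  have "Elist P n (\<lambda>xs. if \<not> A xs then 1 else 0) = Elist P n (\<lambda>xs. 1 + (-1) * (if A xs then 1 else 0))"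
    unfolding Elist_def by (rule sum.cong) auto
  also have "\<dots> = 1 - Elist P n (\<lambda>xs. if A xs then 1 else 0)"
    by (simp only: Elist_add Elist_cmult Elist_const[OF assms])
  finally show ?thesis unfolding seq_prob_Elist .
qed

lemma chebyshev_list:
  assumes "is_dist P" "(\<Sum>x\<in>UNIV. P x * c x) = 0" "a > 0"
  shows "seq_prob P n (\<lambda>xs. a \<le> \<bar>sum_list (map c xs)\<bar>) \<le> real n * (\<Sum>x\<in>UNIV. P x * (c x)\<^sup>2) / a\<^sup>2"
proof -
  have "seq_prob P n (\<lambda>xs. a \<le> \<bar>sum_list (map c xs)\<bar>) \<le> Elist P n (\<lambda>xs. (1/a\<^sup>2) * (sum_list (map c xs))\<^sup>2)"
    unfolding seq_prob_Elist
  proof (rule Elist_mono)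
    show "0 \<le> P x" for x using assms(1) by (simp add: is_dist_def)
    fix xs :: "'a list"
    show "(if a \<le> \<bar>sum_list (map c xs)\<bar> then 1 else 0) \<le> 1 / a\<^sup>2 * (sum_list (map c xs))\<^sup>2"
    proof (cases "a \<le> \<bar>sum_list (map c xs)\<bar>")
      case True
      then have "a\<^sup>2 \<le> (sum_list (map c xs))\<^sup>2" using assms(3)
        by (metis abs_ge_zero abs_of_pos power2_abs power_mono)
      then show ?thesis using True assms(3) by (simp add: field_simps)
    qed simp
  qed
  also have "\<dots> = real n * (\<Sum>x\<in>UNIV. P x * (c x)\<^sup>2) / a\<^sup>2"
    unfolding Elist_cmult Elist_sq[OF assms(1,2)] by simp
  finally show ?thesis .
qed


lemma full_pos: "full_dist P \<Longrightarrow> 0 < P x" by (simp add: full_dist_def)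
lemma full_is: "full_dist P \<Longrightarrow> is_dist P" by (simp add: full_dist_def)
lemma is_nonneg: "is_dist P \<Longrightarrow> 0 \<le> P x" by (simp add: is_dist_def)
lemma is_sum: "is_dist P \<Longrightarrow> (\<Sum>x\<in>UNIV. P x) = 1" by (simp add: is_dist_def)

lemma exp_sum_list: "exp (sum_list (map (h::'a \<Rightarrow> real) xs)) = prod_list (map (\<lambda>x. exp (h x)) xs)"
  by (induct xs) (simp_all add: exp_add)
lemma KL_diff:
  assumes "full_dist Ph0" "full_dist Ph1" "\<And>x. 0 \<le> Q x"
  shows "KL Q Ph0 - KL Q Ph1 = (\<Sum>x\<in>UNIV. Q x * (ln (Ph1 x) - ln (Ph0 x)))"
  unfolding KL_def sum_subtractf[symmetric]
proof (rule sum.cong)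
  fix x
  have p: "0 < Ph0 x" "0 < Ph1 x" using assms full_pos by auto
  show "(if Q x = 0 then 0 else Q x * ln (Q x / Ph0 x)) - (if Q x = 0 then 0 else Q x * ln (Q x / Ph1 x)) =
     Q x * (ln (Ph1 x) - ln (Ph0 x))"
  proof (cases "Q x = 0")
    case False
    then have "0 < Q x" using assms(3)[of x] by simp
    then show ?thesis using p False by (simp add: ln_div algebra_simps)
  qed simp
qed simp

lemma KL_tilt_term:
  fixes q p z g :: real
  assumes "0 < q" "0 < p" "0 < z"
  shows "q * ln (q / p) - q * g + q * ln z \<ge> q - p * exp g / z"
proof -
  define y where "y = p * exp g / (q * z)"
  have y: "0 < y" using assms by (auto simp: y_def intro!: divide_pos_pos mult_pos_pos)
  have "ln y \<le> y - 1" using ln_le_minus_one[OF y] .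
  moreover have "ln y = ln p + g - ln q - ln z" using assms by (simp add: y_def ln_mult ln_div)
  ultimately have "ln q - ln p - g + ln z \<ge> 1 - y" by simp
  then have "q * (ln q - ln p - g + ln z) \<ge> q * (1 - y)" using assms by (intro mult_left_mono) auto
  moreover have "q * y = p * exp g / z" using assms by (simp add: y_def)
  ultimately show ?thesis using assms by (simp add: ln_div algebra_simps)
qed

lemma gibbs:
  fixes Q P :: "'a::finite \<Rightarrow> real" and g :: "'a \<Rightarrow> real"
  assumes "is_dist Q" "full_dist P"
  shows "KL Q P \<ge> (\<Sum>x\<in>UNIV. Q x * g x) - ln (\<Sum>x\<in>UNIV. P x * exp (g x))"
proof -
  define z where "z = (\<Sum>x\<in>UNIV. P x * exp (g x))"
  have P: "0 < P x" for x using assms full_pos by auto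
  have z: "0 < z" unfolding z_def
    by (rule sum_pos) (auto intro: mult_pos_pos P)
  have "(\<Sum>x\<in>UNIV. Q x - P x * exp (g x) / z) \<le>
        (\<Sum>x\<in>UNIV. (if Q x = 0 then 0 else Q x * ln (Q x / P x)) - Q x * g x + Q x * ln z)"
  proof (rule sum_mono)
    fix x
    show "Q x - P x * exp (g x) / z \<le> (if Q x = 0 then 0 else Q x * ln (Q x / P x)) - Q x * g x + Q x * ln z"
    proof (cases "Q x = 0")
      case True then show ?thesis using P[of x] z by simp
    next
      case False
      then have "0 < Q x" using is_nonneg[OF assms(1), of x] by simp
      then show ?thesis using KL_tilt_term[where q="Q x" and p="P x" and z=z and g="g x"] P[of x] z False by simp
    qed
  qed
  moreover have "(\<Sum>x\<in>UNIV. Q x - P x * exp (g x) / z) = 0"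
    using is_sum[OF assms(1)] z by (simp add: sum_subtractf sum_divide_distrib[symmetric] z_def)
  moreover have "(\<Sum>x\<in>UNIV. (if Q x = 0 then 0 else Q x * ln (Q x / P x)) - Q x * g x + Q x * ln z)
      = KL Q P - (\<Sum>x\<in>UNIV. Q x * g x) + ln z"
    using is_sum[OF assms(1)]
    by (simp add: KL_def sum.distrib sum_subtractf sum_distrib_right[symmetric])
  ultimately show ?thesis by (simp add: z_def)
qed

lemma KL_self: "KL P P = 0"
  unfolding KL_def by (rule sum.neutral) auto

lemma type_nonneg: "0 \<le> type_of xs a"
  by (simp add: type_of_def)

lemma sum_list_count:
  fixes h :: "'a::finite \<Rightarrow> real"
  shows "sum_list (map h xs) = (\<Sum>x\<in>UNIV. real (count_list xs x) * h x)"
proof (induct xs)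
  case (Cons a xs)
  have "(\<Sum>x\<in>UNIV. real (count_list (a # xs) x) * h x) =
        (\<Sum>x\<in>UNIV. (if x = a then h x else 0) + real (count_list xs x) * h x)"
    by (rule sum.cong) (auto simp: algebra_simps)
  also have "\<dots> = h a + sum_list (map h xs)"
    by (simp add: sum.distrib Cons)
  finally show ?case by simp
qed simp

lemma sum_type:
  fixes h :: "'a::finite \<Rightarrow> real"
  assumes "length xs = n" "n > 0"
  shows "(\<Sum>x\<in>UNIV. type_of xs x * h x) = sum_list (map h xs) / real n"
  using assms
  by (simp add: type_of_def sum_list_count[of h xs] sum_divide_distrib)

lemma exp_prod_bound:
  fixes l s a :: real
  assumes "0 \<le> l"
  shows "(if s < a then 1 else 0) \<le> exp (l * a) * exp (- l * s)"
proof -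
  have "exp (l * a) * exp (- l * s) = exp (l * (a - s))" by (simp add: exp_add[symmetric] algebra_simps)
  moreover have "s < a \<Longrightarrow> 1 \<le> exp (l * (a - s))" using assms by simp
  ultimately show ?thesis by simp
qed

lemma chernoff:
  fixes h :: "'a::finite \<Rightarrow> real" and l a :: real
  assumes "is_dist P" "0 \<le> l"
  shows "seq_prob P n (\<lambda>xs. sum_list (map h xs) < a) \<le> exp (l * a) * (\<Sum>x\<in>UNIV. P x * exp (- l * h x)) ^ n"
proof -
  have "seq_prob P n (\<lambda>xs. sum_list (map h xs) < a) \<le>
      Elist P n (\<lambda>xs. exp (l * a) * prod_list (map (\<lambda>x. exp (- l * h x)) xs))"
    unfolding seq_prob_Elist
  proof (rule Elist_mono)
    fix xs :: "'a list"
    have e: "sum_list (map (\<lambda>x. - l * h x) xs) = - l * sum_list (map h xs)"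
      by (induct xs) (simp_all add: algebra_simps)
    have "exp (- l * sum_list (map h xs)) = prod_list (map (\<lambda>x. exp (- l * h x)) xs)"
      using exp_sum_list[of "\<lambda>x. - l * h x" xs] e by simp
    then show "(if sum_list (map h xs) < a then 1 else 0) \<le> exp (l * a) * prod_list (map (\<lambda>x. exp (- l * h x)) xs)"
      using exp_prod_bound[OF assms(2), of "sum_list (map h xs)" a] by simp
  qed (use assms in \<open>simp add: is_dist_def\<close>)
  also have "\<dots> = exp (l * a) * (\<Sum>x\<in>UNIV. P x * exp (- l * h x)) ^ n"
    by (simp add: Elist_cmult Elist_prod)
  finally show ?thesis .
qed


locale hyp =
  fixes P0 P1 Ph0 Ph1 :: "'a::finite \<Rightarrow> real"
  assumes F0: "full_dist P0" and F1: "full_dist P1" and G0: "full_dist Ph0" and G1: "full_dist Ph1"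
begin

definition f where "f x = ln (Ph1 x) - ln (Ph0 x)"
definition gam where "gam = (\<Sum>x\<in>UNIV. P0 x * f x)"
definition Zt where "Zt l = (\<Sum>x\<in>UNIV. P1 x * exp (- l * f x))"
definition Qt where "Qt l x = P1 x * exp (- l * f x) / Zt l"
definition mt where "mt l = (\<Sum>x\<in>UNIV. Qt l x * f x)"

lemma P0pos: "0 < P0 x" using F0 full_pos by auto
lemma P1pos: "0 < P1 x" using F1 full_pos by auto

lemma Zt_pos: "0 < Zt l"
  unfolding Zt_def by (rule sum_pos) (auto intro!: mult_pos_pos P1pos)

lemma Qt_pos: "0 < Qt l x"
  unfolding Qt_def using Zt_pos P1pos by (auto intro!: divide_pos_pos mult_pos_pos)

lemma Qt_sum: "(\<Sum>x\<in>UNIV. Qt l x) = 1"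
  unfolding Qt_def using Zt_pos[of l] by (simp add: sum_divide_distrib[symmetric] Zt_def)

lemma Qt_full: "full_dist (Qt l)"
  using Qt_pos Qt_sum by (auto simp: full_dist_def is_dist_def less_imp_le)

lemma Zt0: "Zt 0 = 1" using F1 by (simp add: Zt_def full_dist_def is_dist_def)

lemma Qt0: "Qt 0 = P1" by (rule ext) (simp add: Qt_def Zt0)

lemma KL_Qt: "KL (Qt l) P1 = - l * mt l - ln (Zt l)"
proof -
  have "KL (Qt l) P1 = (\<Sum>x\<in>UNIV. Qt l x * (- l * f x) - Qt l x * ln (Zt l))"
    unfolding KL_def
  proof (rule sum.cong)
    fix x
    have "Qt l x / P1 x = exp (- l * f x) / Zt l" using P1pos[of x] by (simp add: Qt_def)
    then have "ln (Qt l x / P1 x) = - l * f x - ln (Zt l)" using Zt_pos[of l] by (simp add: ln_div)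
    moreover have ne: "Qt l x \<noteq> 0" using Qt_pos[of l x] by simp
    ultimately show "(if Qt l x = 0 then 0 else Qt l x * ln (Qt l x / P1 x)) = Qt l x * (- l * f x) - Qt l x * ln (Zt l)"
      by (simp only: if_not_P[OF ne]) (simp add: algebra_simps)
  qed simp
  also have "\<dots> = - l * mt l - ln (Zt l) * (\<Sum>x\<in>UNIV. Qt l x)"
    by (simp add: sum_subtractf mt_def sum_distrib_left sum_distrib_right algebra_simps)
  finally show ?thesis by (simp add: Qt_sum)
qed

lemma stat_diff: "(\<And>x. 0 \<le> Q x) \<Longrightarrow> KL Q Ph0 - KL Q Ph1 = (\<Sum>x\<in>UNIV. Q x * f x)"
  using KL_diff[OF G0 G1] by (simp add: f_def)

lemma gam_eq: "gam = KL P0 Ph0 - KL P0 Ph1"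
  using stat_diff[of P0] P0pos by (simp add: gam_def less_imp_le)

lemma gibbs_tilt:
  assumes "is_dist Q"
  shows "KL Q P1 \<ge> - l * (\<Sum>x\<in>UNIV. Q x * f x) - ln (Zt l)"
  using gibbs[OF assms F1, of "\<lambda>x. - l * f x"]
  by (simp add: Zt_def sum_distrib_left algebra_simps)

lemma mt_cont: "continuous_on A mt"
proof -
  have nz: "(\<Sum>x\<in>UNIV. P1 x * exp (- (l * f x))) \<noteq> 0" for l
    using Zt_pos[of l] by (simp add: Zt_def)
  show ?thesis unfolding mt_def Qt_def Zt_def
    by (intro continuous_intros) (use nz in auto)
qed

lemma exists_opt: "\<exists>l\<ge>0. mt l \<le> gam \<and> KL (Qt l) P1 = - l * gam - ln (Zt l)"
proof (cases "mt 0 \<le> gam")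
  case True
  then show ?thesis using KL_Qt[of 0] by (intro exI[of _ 0]) simp
next
  case False
  have mt0: "mt 0 = (\<Sum>x\<in>UNIV. P1 x * f x)" by (simp add: mt_def Qt0)
  have "\<exists>x0. f x0 < gam"
  proof (rule ccontr)
    assume "\<not> (\<exists>x0. f x0 < gam)"
    then have ge: "\<And>x. gam \<le> f x" by (simp add: not_less)
    have "(\<Sum>x\<in>UNIV. P0 x * (f x - gam)) = 0"
      using F0 by (simp add: algebra_simps sum_subtractf sum_distrib_right[symmetric] gam_def full_dist_def is_dist_def)
    moreover have "\<And>x. 0 \<le> P0 x * (f x - gam)" using ge P0pos by (simp add: less_imp_le)
    ultimately have "\<And>x. P0 x * (f x - gam) = 0" by (simp add: sum_nonneg_eq_0_iff)
    then have fe: "\<And>x. f x = gam" using P0pos by (metis eq_iff_diff_eq_0 mult_eq_0_iff not_less_iff_gr_or_eq)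
    have "mt 0 = gam" using F1 by (simp add: mt0 fe sum_distrib_right[symmetric] full_dist_def is_dist_def)
    then show False using False by simp
  qed
  then obtain x0 where x0: "f x0 < gam" by blast
  have "Min (range f) \<in> range f" by (rule Min_in) auto
  then obtain xm where xm: "f xm = Min (range f)" by (metis imageE)
  have fm: "f xm \<le> f x" for x using xm by simp
  define m where "m = f xm"
  define p where "p = P1 xm"
  define d where "d = gam - m"
  have p: "0 < p" using P1pos by (simp add: p_def)
  have d: "0 < d" using fm[of x0] x0 by (simp add: d_def m_def)
  define L where "L = 2 / (d * p)"
  have L: "0 < L" using p d by (simp add: L_def)
  have bnd: "exp (- L * f x) * (f x - m) \<le> exp (- L * m) / L" for x
  proof -
    define y where "y = f x - m"
    have y: "0 \<le> y" using fm[of x] by (simp add: y_def m_def)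
    have "L * y \<le> exp (L * y)" using exp_ge_add_one_self[of "L * y"] by linarith
    then have "y \<le> exp (L * y) / L" using L by (simp add: field_simps)
    then have "exp (- L * f x) * y \<le> exp (- L * f x) * (exp (L * y) / L)" by (rule mult_left_mono) auto
    also have "exp (- L * f x) * (exp (L * y) / L) = exp (- L * m) / L"
      by (simp add: y_def exp_add[symmetric] algebra_simps)
    finally show ?thesis by (simp add: y_def)
  qed
  have "mt L - m = (\<Sum>x\<in>UNIV. Qt L x * (f x - m))"
    using Qt_sum[of L] by (simp add: mt_def algebra_simps sum_subtractf sum_distrib_right[symmetric]) (simp add: sum_distrib_left[symmetric])
  also have "\<dots> = (\<Sum>x\<in>UNIV. P1 x * (exp (- L * f x) * (f x - m))) / Zt L"
    by (simp add: Qt_def sum_divide_distrib algebra_simps)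
  also have "\<dots> \<le> (\<Sum>x\<in>UNIV. P1 x * (exp (- L * m) / L)) / Zt L"
    using Zt_pos[of L] P1pos bnd by (intro divide_right_mono sum_mono mult_left_mono) (auto simp: less_imp_le)
  also have "\<dots> = (exp (- L * m) / L) / Zt L"
  proof -
    have "(\<Sum>x\<in>UNIV. P1 x * (exp (- L * m) / L)) = (\<Sum>x\<in>UNIV. P1 x) * (exp (- L * m) / L)"
      by (rule sum_distrib_right[symmetric])
    then show ?thesis using is_sum[OF full_is[OF F1]] by simp
  qed
  also have "\<dots> \<le> (exp (- L * m) / L) / (p * exp (- L * m))"
  proof -
    have "p * exp (- L * m) \<le> Zt L" unfolding Zt_def p_def m_def
      by (rule member_le_sum[where f="\<lambda>x. P1 x * exp (- L * f x)"]) (auto intro!: mult_nonneg_nonneg less_imp_le[OF P1pos])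
    then show ?thesis using p L Zt_pos[of L] by (intro divide_left_mono) (auto intro!: mult_pos_pos)
  qed
  also have "\<dots> = 1 / (L * p)" using p by simp
  also have "\<dots> = d / 2" using p d by (simp add: L_def)
  finally have "mt L \<le> gam" using d by (simp add: d_def)
  moreover have "gam \<le> mt 0" using False by simp
  ultimately obtain l where l: "0 \<le> l" "l \<le> L" "mt l = gam"
    using IVT2'[of mt L gam 0] L mt_cont by auto
  then show ?thesis using KL_Qt[of l] by (intro exI[of _ l]) auto
qed

definition lopt where "lopt = (SOME l. l \<ge> 0 \<and> mt l \<le> gam \<and> KL (Qt l) P1 = - l * gam - ln (Zt l))"
definition Qm where "Qm = Qt lopt"

lemma lopt: "lopt \<ge> 0" "mt lopt \<le> gam" "KL Qm P1 = - lopt * gam - ln (Zt lopt)"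
  using someI_ex[OF exists_opt] unfolding lopt_def[symmetric] Qm_def by auto

lemma Qm_full: "full_dist Qm" by (simp add: Qm_def Qt_full)

lemma Qm_min: "is_dist Q \<Longrightarrow> (\<Sum>x\<in>UNIV. Q x * f x) \<le> gam \<Longrightarrow> KL Qm P1 \<le> KL Q P1"
  using gibbs_tilt[of Q lopt] lopt mult_left_mono[of "(\<Sum>x\<in>UNIV. Q x * f x)" gam lopt]
  by simp

lemma Qm_stat: "KL Qm Ph0 - KL Qm Ph1 \<le> gam"
  using stat_diff[of Qm] Qm_full lopt(2) by (simp add: Qm_def mt_def full_dist_def less_imp_le)

end

lemma ereal_le_from_above:
  fixes L :: ereal
  assumes "\<And>e. e > 0 \<Longrightarrow> L \<le> ereal (K + e)"
  shows "L \<le> ereal K"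
proof (cases L)
  case (real r)
  have "r \<le> K"
  proof (rule ccontr)
    assume "\<not> r \<le> K"
    then have "L \<le> ereal (K + (r - K)/2)" using assms by simp
    then have "r \<le> K + (r - K)/2" using real by simp
    then show False using \<open>\<not> r \<le> K\<close> by (auto simp: field_simps)
  qed
  then show ?thesis using real by simp
next
  case PInf
  then show ?thesis using assms[of 1] by simp
qed simp

lemma ereal_ge_from_below:
  fixes L :: ereal
  assumes "\<And>e. e > 0 \<Longrightarrow> ereal (K - e) \<le> L"
  shows "ereal K \<le> L"
proof (cases L)
  case (real r)
  have "K \<le> r"
  proof (rule ccontr)
    assume "\<not> K \<le> r"
    then have "ereal (K - (K - r)/2) \<le> L" using assms by simp
    then have "K - (K - r)/2 \<le> r" using real by simp
    then show False using \<open>\<not> K \<le> r\<close> by (auto simp: field_simps)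
  qed
  then show ?thesis using real by simp
next
  case MInf
  then show ?thesis using assms[of 1] by simp
qed simp

lemma seq_prob_cong:
  assumes "\<And>xs. length xs = n \<Longrightarrow> A xs = B xs"
  shows "seq_prob P n A = seq_prob P n B"
  unfolding seq_prob_def using assms by (intro sum.cong) auto

lemma seq_prob_union:
  assumes "is_dist P"
  shows "seq_prob P n (\<lambda>xs. A xs \<and> B xs) \<ge> 1 - seq_prob P n (\<lambda>xs. \<not> A xs) - seq_prob P n (\<lambda>xs. \<not> B xs)"
proof -
  have "Elist P n (\<lambda>xs. 1 + (-1) * (if \<not> A xs then 1 else 0) + (-1) * (if \<not> B xs then 1 else 0))
     \<le> Elist P n (\<lambda>xs. if A xs \<and> B xs then 1 else 0)"
    by (rule Elist_mono) (use assms in \<open>auto simp: is_dist_def\<close>)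
  then show ?thesis unfolding seq_prob_Elist
    by (simp only: Elist_add Elist_cmult Elist_const[OF assms])
qed

lemma prod_change0:
  fixes Q r :: "'a \<Rightarrow> real"
  shows "prod_list (map (\<lambda>x. Q x * exp (- r x)) xs) = prod_list (map Q xs) * exp (- sum_list (map r xs))"
proof (induct xs)
  case (Cons a xs)
  have e: "exp (- r a) * exp (- sum_list (map r xs)) = exp (- sum_list (map r (a # xs)))"
    by (simp add: mult_exp_exp)
  have "prod_list (map (\<lambda>x. Q x * exp (- r x)) (a # xs)) = Q a * prod_list (map Q xs) * (exp (- r a) * exp (- sum_list (map r xs)))"
    using Cons by simp
  then show ?case by (simp only: e) simp
qed simp

lemma prod_change:
  fixes P Q r :: "'a \<Rightarrow> real"
  assumes "\<And>x. P x = Q x * exp (- r x)"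
  shows "prod_list (map P xs) = prod_list (map Q xs) * exp (- sum_list (map r xs))"
proof -
  have "P = (\<lambda>x. Q x * exp (- r x))" using assms by auto
  then show ?thesis using prod_change0 by simp
qed

context hyp begin

definition S where "S xs = sum_list (map f xs)"

lemma decide_iff:
  assumes "length xs = n" "n > 0"
  shows "decide1 Ph0 Ph1 g xs \<longleftrightarrow> real n * g \<le> S xs"
proof -
  have "KL (type_of xs) Ph0 - KL (type_of xs) Ph1 = S xs / real n"
    using stat_diff[of "type_of xs"] sum_type[OF assms, of f] by (simp add: type_nonneg S_def)
  then have "decide1 Ph0 Ph1 g xs \<longleftrightarrow> g \<le> S xs / real n" by (simp add: decide1_def)
  also have "\<dots> \<longleftrightarrow> real n * g \<le> S xs" using assms by (simp add: pos_le_divide_eq mult.commute)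
  finally show ?thesis .
qed

lemma eps0_eq: "n > 0 \<Longrightarrow> eps0 P0 Ph0 Ph1 n g = seq_prob P0 n (\<lambda>xs. real n * g \<le> S xs)"
  unfolding eps0_def by (rule seq_prob_cong) (simp add: decide_iff)

lemma eps1_eq: "n > 0 \<Longrightarrow> eps1 P1 Ph0 Ph1 n g = seq_prob P1 n (\<lambda>xs. S xs < real n * g)"
  unfolding eps1_def by (rule seq_prob_cong) (auto simp: decide_iff not_le)

lemma S_centered: "S xs - real (length xs) * c = sum_list (map (\<lambda>x. f x - c) xs)"
  by (induct xs) (auto simp: S_def algebra_simps)

definition V where "V = (\<Sum>x\<in>UNIV. P0 x * (f x - gam)\<^sup>2)"

lemma P0dist: "is_dist P0" using F0 by (simp add: full_dist_def)
lemma P1dist: "is_dist P1" using F1 by (simp add: full_dist_def)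

lemma centered_mean:
  assumes "is_dist Q" shows "(\<Sum>x\<in>UNIV. Q x * (h x - (\<Sum>x\<in>UNIV. Q x * h x))) = 0"
  using is_sum[OF assms] by (simp add: algebra_simps sum_subtractf sum_distrib_right[symmetric])

lemma cheb_dev:
  assumes "is_dist Q" "d > 0" "n > 0"
  shows "seq_prob Q n (\<lambda>xs. real n * d \<le> \<bar>sum_list (map h xs) - real n * (\<Sum>x\<in>UNIV. Q x * h x)\<bar>)
     \<le> (\<Sum>x\<in>UNIV. Q x * (h x - (\<Sum>x\<in>UNIV. Q x * h x))\<^sup>2) / (real n * d\<^sup>2)"
proof -
  define mu where "mu = (\<Sum>x\<in>UNIV. Q x * h x)"
  have c: "sum_list (map h xs) - real (length xs) * mu = sum_list (map (\<lambda>x. h x - mu) xs)" for xs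
    by (induct xs) (auto simp: algebra_simps)
  have "seq_prob Q n (\<lambda>xs. real n * d \<le> \<bar>sum_list (map h xs) - real n * mu\<bar>)
      = seq_prob Q n (\<lambda>xs. real n * d \<le> \<bar>sum_list (map (\<lambda>x. h x - mu) xs)\<bar>)"
    by (rule seq_prob_cong) (simp add: c[symmetric])
  also have "\<dots> \<le> real n * (\<Sum>x\<in>UNIV. Q x * (h x - mu)\<^sup>2) / (real n * d)\<^sup>2"
    using chebyshev_list[OF assms(1) centered_mean[OF assms(1), of h, folded mu_def], of "real n * d" n] assms
    by simp
  also have "\<dots> = (\<Sum>x\<in>UNIV. Q x * (h x - mu)\<^sup>2) / (real n * d\<^sup>2)"
    using assms by (simp add: power2_eq_square field_simps)
  finally show ?thesis unfolding mu_def .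
qed

end

lemma ev_small:
  fixes c e :: real
  assumes "e > 0"
  shows "eventually (\<lambda>n. c / real n \<le> e) sequentially"
proof -
  have "(\<lambda>n. c / real n) \<longlonglongrightarrow> 0" by (rule lim_const_over_n)
  from order_tendstoD(2)[OF this assms] show ?thesis by eventually_elim simp
qed

context hyp begin

definition K where "K = KL Qm P1"

lemma rate_lower:
  assumes "n > 0"
  shows "ereal (K - lopt * (g - gam)) \<le> neglog_rate n (eps1 P1 Ph0 Ph1 n g)"
proof -
  define B where "B = exp (lopt * (real n * g)) * Zt lopt ^ n"
  have B: "0 < B" using Zt_pos by (simp add: B_def)
  have le: "eps1 P1 Ph0 Ph1 n g \<le> B"
    unfolding eps1_eq[OF assms] B_def S_def Zt_def using chernoff[OF P1dist lopt(1), of n f "real n * g"] by simp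
  have nn: "0 \<le> eps1 P1 Ph0 Ph1 n g" unfolding eps1_def by (rule seq_prob_nonneg[OF P1dist])
  show ?thesis
  proof (cases "eps1 P1 Ph0 Ph1 n g = 0")
    case False
    then have pos: "0 < eps1 P1 Ph0 Ph1 n g" using nn by simp
    have "ln (eps1 P1 Ph0 Ph1 n g) \<le> ln B" using pos le by simp
    moreover have "ln B = lopt * (real n * g) + real n * ln (Zt lopt)"
      using Zt_pos[of lopt] by (simp add: B_def ln_mult ln_realpow)
    ultimately have "- ln (eps1 P1 Ph0 Ph1 n g) / real n \<ge> - (lopt * (real n * g) + real n * ln (Zt lopt)) / real n"
      using assms by (intro divide_right_mono) auto
    moreover have "- (lopt * (real n * g) + real n * ln (Zt lopt)) / real n = K - lopt * (g - gam)"
      using assms lopt(3) by (simp add: K_def field_simps)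
    ultimately show ?thesis using False by (simp add: neglog_rate_def)
  qed (simp add: neglog_rate_def)
qed

lemma exponent_lower:
  assumes "\<And>\<eta>. \<eta> > 0 \<Longrightarrow> eventually (\<lambda>n. gs n \<le> gam + \<eta>) sequentially"
  shows "ereal K \<le> exponent1 P1 Ph0 Ph1 gs"
  unfolding exponent1_def
proof (rule ereal_ge_from_below)
  fix e :: real assume e: "e > 0"
  define \<eta> where "\<eta> = e / (lopt + 1)"
  have \<eta>: "\<eta> > 0" using e lopt(1) by (simp add: \<eta>_def)
  have le: "lopt * \<eta> \<le> e" using e lopt(1) by (simp add: \<eta>_def field_simps)
  show "ereal (K - e) \<le> liminf (\<lambda>n. neglog_rate n (eps1 P1 Ph0 Ph1 n (gs n)))"
  proof (rule Liminf_bounded)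
    have "eventually (\<lambda>n. gs n \<le> gam + \<eta> \<and> n > 0) sequentially"
      using assms[OF \<eta>] eventually_gt_at_top[of 0] by eventually_elim auto
    then show "eventually (\<lambda>n. ereal (K - e) \<le> neglog_rate n (eps1 P1 Ph0 Ph1 n (gs n))) sequentially"
    proof eventually_elim
      case (elim n)
      have "K - e \<le> K - lopt * (gs n - gam)"
        using elim le lopt(1) mult_left_mono[of "gs n - gam" \<eta> lopt] by simp
      then show ?case using rate_lower[of n "gs n"] elim by (meson ereal_less_eq(3) order_trans)
    qed
  qed
qed

lemma const_admissible:
  assumes "\<eta> > 0" "\<epsilon> > 0"
  shows "admissible P0 Ph0 Ph1 \<epsilon> (\<lambda>n. gam + \<eta>)"
  unfolding admissible_def
proof (rule Limsup_bounded)
  have "eventually (\<lambda>n. V / \<eta>\<^sup>2 / real n \<le> \<epsilon> \<and> n > 0) sequentially"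
    using ev_small[OF assms(2), of "V / \<eta>\<^sup>2"] eventually_gt_at_top[of 0] by eventually_elim auto
  then show "eventually (\<lambda>n. ereal (eps0 P0 Ph0 Ph1 n (gam + \<eta>)) \<le> ereal \<epsilon>) sequentially"
  proof eventually_elim
    case (elim n)
    have "eps0 P0 Ph0 Ph1 n (gam + \<eta>) = seq_prob P0 n (\<lambda>xs. real n * (gam + \<eta>) \<le> S xs)"
      using elim by (simp add: eps0_eq)
    also have "\<dots> \<le> seq_prob P0 n (\<lambda>xs. real n * \<eta> \<le> \<bar>sum_list (map f xs) - real n * (\<Sum>x\<in>UNIV. P0 x * f x)\<bar>)"
      by (rule seq_prob_mono) (auto simp: is_nonneg[OF P0dist] S_def gam_def[symmetric] algebra_simps)
    also have "\<dots> \<le> V / (real n * \<eta>\<^sup>2)"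
      using cheb_dev[OF P0dist assms(1), of n f] elim by (simp add: V_def gam_def[symmetric])
    also have "\<dots> \<le> \<epsilon>" using elim by (simp add: field_simps)
    finally show ?case by simp
  qed
qed

lemma const_exponent:
  assumes "\<eta> > 0"
  shows "ereal (K - lopt * \<eta>) \<le> exponent1 P1 Ph0 Ph1 (\<lambda>n. gam + \<eta>)"
  unfolding exponent1_def
proof (rule Liminf_bounded)
  show "eventually (\<lambda>n. ereal (K - lopt * \<eta>) \<le> neglog_rate n (eps1 P1 Ph0 Ph1 n (gam + \<eta>))) sequentially"
    using eventually_gt_at_top[of 0]
  proof eventually_elim
    case (elim n)
    then show ?case using rate_lower[of n "gam + \<eta>"] by simp
  qed
qed

end

lemma conv_pos:
  fixes a b t :: real
  assumes "0 < a" "0 < b" "0 \<le> t" "t \<le> 1"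
  shows "0 < (1 - t) * a + t * b"
proof (cases "t < 1")
  case True
  then have "0 < (1 - t) * a" using assms by simp
  moreover have "0 \<le> t * b" using assms by simp
  ultimately show ?thesis by simp
next
  case False
  then show ?thesis using assms by simp
qed

lemma seq_prob_change:
  fixes P Q r :: "'a::finite \<Rightarrow> real"
  assumes "\<And>x. P x = Q x * exp (- r x)" "\<And>x. 0 \<le> Q x"
  shows "exp (- c) * seq_prob Q n (\<lambda>xs. A xs \<and> sum_list (map r xs) \<le> c) \<le> seq_prob P n A"
proof -
  have "exp (- c) * seq_prob Q n (\<lambda>xs. A xs \<and> sum_list (map r xs) \<le> c) =
      (\<Sum>xs\<in>{xs. length xs = n}. prod_list (map Q xs) * (exp (- c) * (if A xs \<and> sum_list (map r xs) \<le> c then 1 else 0)))"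
    unfolding seq_prob_Elist Elist_def by (simp add: sum_distrib_left ac_simps)
  also have "\<dots> \<le> (\<Sum>xs\<in>{xs. length xs = n}. prod_list (map P xs) * (if A xs then 1 else 0))"
  proof (rule sum_mono)
    fix xs :: "'a list"
    have q: "0 \<le> prod_list (map Q xs)" by (rule prod_list_nonneg) (auto intro: assms(2))
    have pc: "prod_list (map P xs) = prod_list (map Q xs) * exp (- sum_list (map r xs))"
      by (rule prod_change[OF assms(1)])
    have p: "0 \<le> prod_list (map P xs)" using q pc by simp
    show "prod_list (map Q xs) * (exp (- c) * (if A xs \<and> sum_list (map r xs) \<le> c then 1 else 0))
        \<le> prod_list (map P xs) * (if A xs then 1 else 0)"
    proof (cases "A xs \<and> sum_list (map r xs) \<le> c")
      case True
      then have "exp (- c) \<le> exp (- sum_list (map r xs))" by simp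
      then have "prod_list (map Q xs) * exp (- c) \<le> prod_list (map Q xs) * exp (- sum_list (map r xs))"
        using q by (rule mult_left_mono)
      then show ?thesis using True pc by simp
    next
      case False
      then show ?thesis using p by simp
    qed
  qed
  also have "\<dots> = seq_prob P n A" unfolding seq_prob_Elist Elist_def ..
  finally show ?thesis .
qed

context hyp begin

lemma nonconst_below:
  assumes "\<exists>x. f x \<noteq> gam" shows "\<exists>x0. f x0 < gam"
proof (rule ccontr)
  assume "\<not> (\<exists>x0. f x0 < gam)"
  then have ge: "\<And>x. gam \<le> f x" by (simp add: not_less)
  have "(\<Sum>x\<in>UNIV. P0 x * (f x - gam)) = 0"
    using F0 by (simp add: algebra_simps sum_subtractf sum_distrib_right[symmetric] gam_def full_dist_def is_dist_def)
  moreover have "\<And>x. 0 \<le> P0 x * (f x - gam)" using ge P0pos by (simp add: less_imp_le)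
  ultimately have "\<And>x. P0 x * (f x - gam) = 0" by (simp add: sum_nonneg_eq_0_iff)
  then have fe: "\<And>x. f x = gam" using P0pos by (metis eq_iff_diff_eq_0 mult_eq_0_iff not_less_iff_gr_or_eq)
  then show False using assms by simp
qed

lemma mixture:
  assumes "\<exists>x. f x \<noteq> gam" "\<zeta> > 0"
  shows "\<exists>Q. full_dist Q \<and> (\<Sum>x\<in>UNIV. Q x * f x) < gam \<and> KL Q P1 < K + \<zeta>"
proof -
  obtain x0 where x0: "f x0 < gam" using nonconst_below[OF assms(1)] by blast
  define R where "R x = ((if x = x0 then 1 else 0) + P0 x) / 2" for x
  have Rpos: "0 < R x" for x using P0pos[of x] P0pos[of x0] by (simp add: R_def)
  have Rsum: "(\<Sum>x\<in>UNIV. R x) = 1"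
    using is_sum[OF P0dist] by (simp add: R_def sum_divide_distrib[symmetric] sum.distrib)
  have Rf: "(\<Sum>x\<in>UNIV. R x * f x) = (f x0 + gam) / 2"
  proof -
    have e: "R x * f x = ((if x = x0 then f x else 0) + P0 x * f x) / 2" for x by (simp add: R_def field_simps)
    have "(\<Sum>x\<in>UNIV. R x * f x) = (\<Sum>x\<in>UNIV. ((if x = x0 then f x else 0) + P0 x * f x) / 2)"
      by (rule sum.cong[OF refl e])
    also have "\<dots> = ((\<Sum>x\<in>UNIV. (if x = x0 then f x else 0)) + (\<Sum>x\<in>UNIV. P0 x * f x)) / 2"
      by (simp only: sum_divide_distrib[symmetric] sum.distrib)
    finally show ?thesis by (simp add: gam_def)
  qed
  have Qmpos: "0 < Qm x" for x using Qm_full by (simp add: full_dist_def)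
  define Qx where "Qx t x = (1 - t) * Qm x + t * R x" for t x
  define G where "G t = (\<Sum>x\<in>UNIV. Qx t x * ln (Qx t x / P1 x))" for t
  have Qxpos: "0 \<le> t \<Longrightarrow> t \<le> 1 \<Longrightarrow> 0 < Qx t x" for t x
    unfolding Qx_def by (rule conv_pos[OF Qmpos Rpos])
  have KLG: "0 \<le> t \<Longrightarrow> t \<le> 1 \<Longrightarrow> KL (Qx t) P1 = G t" for t
    unfolding KL_def G_def by (rule sum.cong) (use Qxpos in \<open>auto simp: less_imp_le\<close>)
  have "Qx 0 = Qm" by (rule ext) (simp add: Qx_def)
  then have G0: "G 0 = K" using KLG[of 0] by (simp add: K_def)
  have "isCont G 0"
  proof -
    have nz: "Qm x / P1 x \<noteq> 0" for x using Qmpos[of x] P1pos[of x] by simp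
    show ?thesis unfolding G_def Qx_def
      by (intro continuous_intros) (use nz in auto)
  qed
  then obtain d where d: "d > 0" "\<And>t. dist t 0 < d \<Longrightarrow> dist (G t) (G 0) < \<zeta>"
    using assms(2) unfolding continuous_at_eps_delta by blast
  define t where "t = min (d/2) 1"
  have t: "0 < t" "t \<le> 1" "dist t 0 < d" using d by (auto simp: t_def dist_real_def)
  have "G t < K + \<zeta>" using d(2)[OF t(3)] G0 by (simp add: dist_real_def abs_less_iff)
  then have kl: "KL (Qx t) P1 < K + \<zeta>" using KLG[of t] t by simp
  have full: "full_dist (Qx t)"
    unfolding full_dist_def is_dist_def using Qxpos[of t] t
    by (auto simp: less_imp_le Qx_def sum.distrib sum_distrib_left[symmetric] Rsum
        is_sum[OF full_is[OF Qm_full]])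
  have "(\<Sum>x\<in>UNIV. Qx t x * f x) = (1 - t) * mt lopt + t * ((f x0 + gam) / 2)"
    by (simp add: Qx_def distrib_right sum.distrib sum_distrib_left[symmetric] mt_def Qm_def[symmetric] mult.assoc Rf)
  also have "\<dots> < gam"
  proof -
    have "(1 - t) * mt lopt \<le> (1 - t) * gam" using t lopt(2) by (intro mult_left_mono) auto
    moreover have "t * ((f x0 + gam) / 2) < t * gam" using t x0 by (intro mult_strict_left_mono) auto
    ultimately show ?thesis by (simp add: algebra_simps add_divide_distrib)
  qed
  finally show ?thesis using full kl by blast
qed

end

context hyp begin

lemma adm_lower:
  assumes adm: "admissible P0 Ph0 Ph1 \<epsilon> gs" and e1: "\<epsilon> < 1" and d: "\<delta> > 0"
  shows "eventually (\<lambda>n. gam - \<delta> \<le> gs n) sequentially"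
proof -
  define c where "c = (1 + \<epsilon>) / 2"
  have c: "\<epsilon> < c" "c < 1" using e1 by (auto simp: c_def)
  have ev1: "eventually (\<lambda>n. ereal (eps0 P0 Ph0 Ph1 n (gs n)) < ereal c) sequentially"
    by (rule Limsup_lessD) (use adm c in \<open>auto simp: admissible_def intro: le_less_trans\<close>)
  have ev2: "eventually (\<lambda>n. V / \<delta>\<^sup>2 / real n \<le> 1 - c) sequentially"
    by (rule ev_small) (use c in simp)
  show ?thesis using ev1 ev2 eventually_gt_at_top[of 0]
  proof eventually_elim
    case (elim n)
    show ?case
    proof (rule ccontr)
      assume "\<not> gam - \<delta> \<le> gs n"
      then have lt: "gs n < gam - \<delta>" by simp
      have "seq_prob P0 n (\<lambda>xs. S xs < real n * (gam - \<delta>)) \<le>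
            seq_prob P0 n (\<lambda>xs. real n * \<delta> \<le> \<bar>sum_list (map f xs) - real n * (\<Sum>x\<in>UNIV. P0 x * f x)\<bar>)"
        by (rule seq_prob_mono) (auto simp: is_nonneg[OF P0dist] S_def gam_def[symmetric] algebra_simps)
      also have "\<dots> \<le> V / (real n * \<delta>\<^sup>2)"
        using cheb_dev[OF P0dist d, of n f] elim by (simp add: V_def gam_def[symmetric])
      also have "\<dots> \<le> 1 - c" using elim by (simp add: field_simps)
      finally have a: "seq_prob P0 n (\<lambda>xs. S xs < real n * (gam - \<delta>)) \<le> 1 - c" .
      have nm: "real n * gs n \<le> real n * (gam - \<delta>)" using lt by (intro mult_left_mono) auto
      have "seq_prob P0 n (\<lambda>xs. \<not> S xs < real n * (gam - \<delta>)) \<le> seq_prob P0 n (\<lambda>xs. real n * gs n \<le> S xs)"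
      proof (rule seq_prob_mono)
        show "0 \<le> P0 x" for x by (rule is_nonneg[OF P0dist])
        show "real n * gs n \<le> S xs" if "\<not> S xs < real n * (gam - \<delta>)" for xs using nm that by linarith
      qed
      also have "\<dots> = eps0 P0 Ph0 Ph1 n (gs n)" using elim by (simp add: eps0_eq)
      finally have "1 - seq_prob P0 n (\<lambda>xs. S xs < real n * (gam - \<delta>)) \<le> eps0 P0 Ph0 Ph1 n (gs n)"
        by (simp add: seq_prob_compl[OF P0dist])
      then show False using a elim by simp
    qed
  qed
qed

lemma change_measure:
  assumes Q: "full_dist Q" and a: "(\<Sum>x\<in>UNIV. Q x * f x) < a" and eta: "\<eta> > 0"
  shows "eventually (\<lambda>n. exp (- (real n * (KL Q P1 + \<eta>))) / 2 \<le> seq_prob P1 n (\<lambda>xs. S xs < real n * a)) sequentially"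
proof -
  have Qp: "0 < Q x" for x using Q by (simp add: full_dist_def)
  have Qd: "is_dist Q" using Q by (simp add: full_dist_def)
  define r where "r x = ln (Q x / P1 x)" for x
  define D where "D = KL Q P1"
  define mu where "mu = (\<Sum>x\<in>UNIV. Q x * f x)"
  define d where "d = a - mu"
  have d: "d > 0" using a by (simp add: d_def mu_def)
  have Pr: "P1 x = Q x * exp (- r x)" for x
    using Qp[of x] P1pos[of x] by (simp add: r_def exp_minus)
  have Dr: "D = (\<Sum>x\<in>UNIV. Q x * r x)"
    unfolding D_def KL_def r_def by (rule sum.cong) (use Qp in \<open>auto simp: less_imp_le\<close>)
  define Vf where "Vf = (\<Sum>x\<in>UNIV. Q x * (f x - mu)\<^sup>2)"
  define Vr where "Vr = (\<Sum>x\<in>UNIV. Q x * (r x - D)\<^sup>2)"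
  have ev1: "eventually (\<lambda>n. Vf / d\<^sup>2 / real n \<le> 1/4) sequentially" by (rule ev_small) simp
  have ev2: "eventually (\<lambda>n. Vr / \<eta>\<^sup>2 / real n \<le> 1/4) sequentially" by (rule ev_small) simp
  show ?thesis using ev1 ev2 eventually_gt_at_top[of 0]
  proof eventually_elim
    case (elim n)
    have nA: "seq_prob Q n (\<lambda>xs. \<not> S xs < real n * a) \<le> 1/4"
    proof -
      have "seq_prob Q n (\<lambda>xs. \<not> S xs < real n * a) \<le>
            seq_prob Q n (\<lambda>xs. real n * d \<le> \<bar>sum_list (map f xs) - real n * (\<Sum>x\<in>UNIV. Q x * f x)\<bar>)"
        by (rule seq_prob_mono) (auto simp: is_nonneg[OF Qd] S_def mu_def[symmetric] d_def algebra_simps)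
      also have "\<dots> \<le> Vf / (real n * d\<^sup>2)"
        using cheb_dev[OF Qd d, of n f] elim by (simp add: Vf_def mu_def[symmetric])
      also have "\<dots> \<le> 1/4" using elim by (simp add: field_simps)
      finally show ?thesis .
    qed
    have nB: "seq_prob Q n (\<lambda>xs. \<not> sum_list (map r xs) \<le> real n * (D + \<eta>)) \<le> 1/4"
    proof -
      have "seq_prob Q n (\<lambda>xs. \<not> sum_list (map r xs) \<le> real n * (D + \<eta>)) \<le>
            seq_prob Q n (\<lambda>xs. real n * \<eta> \<le> \<bar>sum_list (map r xs) - real n * (\<Sum>x\<in>UNIV. Q x * r x)\<bar>)"
        by (rule seq_prob_mono) (auto simp: is_nonneg[OF Qd] Dr[symmetric] algebra_simps)
      also have "\<dots> \<le> Vr / (real n * \<eta>\<^sup>2)"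
        using cheb_dev[OF Qd eta, of n r] elim by (simp add: Vr_def Dr[symmetric])
      also have "\<dots> \<le> 1/4" using elim by (simp add: field_simps)
      finally show ?thesis .
    qed
    have AB: "1/2 \<le> seq_prob Q n (\<lambda>xs. S xs < real n * a \<and> sum_list (map r xs) \<le> real n * (D + \<eta>))"
      using seq_prob_union[OF Qd, of n "\<lambda>xs. S xs < real n * a" "\<lambda>xs. sum_list (map r xs) \<le> real n * (D + \<eta>)"] nA nB
      by simp
    have "exp (- (real n * (D + \<eta>))) / 2 \<le> exp (- (real n * (D + \<eta>))) * seq_prob Q n (\<lambda>xs. S xs < real n * a \<and> sum_list (map r xs) \<le> real n * (D + \<eta>))"
      using AB by simp
    also have "\<dots> \<le> seq_prob P1 n (\<lambda>xs. S xs < real n * a)"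
      by (rule seq_prob_change[OF Pr]) (use Qp in \<open>simp add: less_imp_le\<close>)
    finally show ?case by (simp add: D_def)
  qed
qed

lemma K_nonneg: "0 \<le> K"
  using gibbs[OF full_is[OF Qm_full] F1, of "\<lambda>_. 0"] is_sum[OF P1dist] by (simp add: K_def)

lemma S_const: "(\<And>x. f x = gam) \<Longrightarrow> S xs = real (length xs) * gam"
  by (induct xs) (auto simp: S_def algebra_simps)

lemma seq_prob_True: "is_dist P \<Longrightarrow> seq_prob P n (\<lambda>_. True) = 1"
  by (simp add: seq_prob_Elist Elist_const)

lemma converse:
  assumes adm: "admissible P0 Ph0 Ph1 \<epsilon> gs" and e1: "\<epsilon> < 1"
  shows "exponent1 P1 Ph0 Ph1 gs \<le> ereal K"
proof (cases "\<forall>x. f x = gam")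
  case True
  have ev1: "eventually (\<lambda>n. ereal (eps0 P0 Ph0 Ph1 n (gs n)) < ereal 1) sequentially"
    by (rule Limsup_lessD) (use adm e1 in \<open>auto simp: admissible_def intro: le_less_trans\<close>)
  have "eventually (\<lambda>n. neglog_rate n (eps1 P1 Ph0 Ph1 n (gs n)) \<le> ereal K) sequentially"
    using ev1 eventually_gt_at_top[of 0]
  proof eventually_elim
    case (elim n)
    have gt: "gam < gs n"
    proof (rule ccontr)
      assume "\<not> gam < gs n"
      then have "eps0 P0 Ph0 Ph1 n (gs n) = seq_prob P0 n (\<lambda>_. True)"
        using elim by (simp add: eps0_eq, intro seq_prob_cong) (auto simp: S_const[OF True[rule_format]] intro: mult_left_mono)
      then show False using elim seq_prob_True[OF P0dist] by simp
    qed
    have "eps1 P1 Ph0 Ph1 n (gs n) = seq_prob P1 n (\<lambda>_. True)"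
      using elim gt by (simp add: eps1_eq, intro seq_prob_cong) (auto simp: S_const[OF True[rule_format]])
    then have "eps1 P1 Ph0 Ph1 n (gs n) = 1" using seq_prob_True[OF P1dist] by simp
    then show ?case using K_nonneg by (simp add: neglog_rate_def)
  qed
  then have "limsup (\<lambda>n. neglog_rate n (eps1 P1 Ph0 Ph1 n (gs n))) \<le> ereal K" by (rule Limsup_bounded)
  then show ?thesis unfolding exponent1_def
    using Liminf_le_Limsup[of sequentially] by (meson order_trans trivial_limit_sequentially)
next
  case False
  then have nc: "\<exists>x. f x \<noteq> gam" by simp
  show ?thesis unfolding exponent1_def
  proof (rule ereal_le_from_above)
    fix e :: real assume e: "e > 0"
    obtain Q where Q: "full_dist Q" "(\<Sum>x\<in>UNIV. Q x * f x) < gam" "KL Q P1 < K + e/2"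
      using mixture[OF nc, of "e/2"] e by auto
    define mu where "mu = (\<Sum>x\<in>UNIV. Q x * f x)"
    define \<delta> where "\<delta> = (gam - mu) / 2"
    have \<delta>: "\<delta> > 0" using Q(2) by (simp add: \<delta>_def mu_def)
    have mua: "(\<Sum>x\<in>UNIV. Q x * f x) < gam - \<delta>" using Q(2) by (simp add: \<delta>_def mu_def field_simps)
    have ev: "eventually (\<lambda>n. ln 2 / real n \<le> e/4) sequentially" by (rule ev_small) (use e in simp)
    have e4: "e/4 > 0" using e by simp
    have "eventually (\<lambda>n. neglog_rate n (eps1 P1 Ph0 Ph1 n (gs n)) \<le> ereal (K + e)) sequentially"
      using adm_lower[OF adm e1 \<delta>] change_measure[OF Q(1) mua e4] ev eventually_gt_at_top[of 0]
    proof eventually_elim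
      case (elim n)
      define L where "L = exp (- (real n * (KL Q P1 + e/4))) / 2"
      have L: "0 < L" by (simp add: L_def)
      have nm: "real n * (gam - \<delta>) \<le> real n * gs n" using elim by (intro mult_left_mono) auto
      have "L \<le> seq_prob P1 n (\<lambda>xs. S xs < real n * (gam - \<delta>))" using elim by (simp add: L_def)
      also have "\<dots> \<le> seq_prob P1 n (\<lambda>xs. S xs < real n * gs n)"
      proof (rule seq_prob_mono)
        show "0 \<le> P1 x" for x by (rule is_nonneg[OF P1dist])
        show "S xs < real n * gs n" if "S xs < real n * (gam - \<delta>)" for xs using nm that by linarith
      qed
      also have "\<dots> = eps1 P1 Ph0 Ph1 n (gs n)" using elim by (simp add: eps1_eq)
      finally have Le: "L \<le> eps1 P1 Ph0 Ph1 n (gs n)" .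
      then have pos: "0 < eps1 P1 Ph0 Ph1 n (gs n)" using L by simp
      have "ln L \<le> ln (eps1 P1 Ph0 Ph1 n (gs n))" using Le L by simp
      moreover have "ln L = - (real n * (KL Q P1 + e/4)) - ln 2" by (simp add: L_def ln_div)
      ultimately have "- ln (eps1 P1 Ph0 Ph1 n (gs n)) / real n \<le> (real n * (KL Q P1 + e/4) + ln 2) / real n"
        using elim by (intro divide_right_mono) auto
      also have "\<dots> = KL Q P1 + e/4 + ln 2 / real n" using elim by (simp add: field_simps)
      also have "\<dots> \<le> K + e" using elim(3) Q(3) by linarith
      finally show ?case using pos by (simp add: neglog_rate_def)
    qed
    then have "limsup (\<lambda>n. neglog_rate n (eps1 P1 Ph0 Ph1 n (gs n))) \<le> ereal (K + e)" by (rule Limsup_bounded)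
    then show "liminf (\<lambda>n. neglog_rate n (eps1 P1 Ph0 Ph1 n (gs n))) \<le> ereal (K + e)"
      using Liminf_le_Limsup[of sequentially] by (meson order_trans trivial_limit_sequentially)
  qed
qed

lemma stein_eq:
  assumes "0 < \<epsilon>" "\<epsilon> < 1"
  shows "stein_exp P0 P1 Ph0 Ph1 \<epsilon> = ereal K"
proof (rule antisym)
  show "stein_exp P0 P1 Ph0 Ph1 \<epsilon> \<le> ereal K"
    unfolding stein_exp_def by (rule SUP_least) (use converse assms in auto)
  show "ereal K \<le> stein_exp P0 P1 Ph0 Ph1 \<epsilon>"
  proof (rule ereal_ge_from_below)
    fix e :: real assume e: "e > 0"
    define \<eta> where "\<eta> = e / (lopt + 1)"
    have \<eta>: "\<eta> > 0" using e lopt(1) by (simp add: \<eta>_def)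
    have le: "lopt * \<eta> \<le> e" using e lopt(1) by (simp add: \<eta>_def field_simps)
    have "ereal (K - e) \<le> ereal (K - lopt * \<eta>)" using le by simp
    also have "\<dots> \<le> exponent1 P1 Ph0 Ph1 (\<lambda>n. gam + \<eta>)" by (rule const_exponent[OF \<eta>])
    also have "\<dots> \<le> stein_exp P0 P1 Ph0 Ph1 \<epsilon>"
      unfolding stein_exp_def by (rule SUP_upper) (use const_admissible[OF \<eta> assms(1)] in simp)
    finally show "ereal (K - e) \<le> stein_exp P0 P1 Ph0 Ph1 \<epsilon>" .
  qed
qed

end

abbreviation "NN \<equiv> std_normal_distribution"

interpretation NN: real_distribution NN by (rule real_dist_normal_dist)

lemma NN_single: "measure NN {x} = 0"
proof -
  have "emeasure NN {x} = (\<integral>\<^sup>+ y. ennreal (std_normal_density y) * indicator {x} y \<partial>lborel)"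
    by (rule emeasure_density) auto
  also have "\<dots> = 0"
    using AE_lborel_singleton[of x]
    by (subst nn_integral_0_iff_AE) (auto elim!: eventually_mono)
  finally show ?thesis by (simp add: measure_def)
qed

lemma Phi_cont: "isCont (cdf NN) x"
  using NN.isCont_cdf NN_single by simp

lemma gauss_tail_eq: "gauss_tail t = 1 - cdf NN t"
proof -
  have "{t<..} = space NN - {..t}" by auto
  then have "measure NN {t<..} = 1 - measure NN {..t}"
    using NN.prob_compl[of "{..t}"] by simp
  then show ?thesis by (simp add: gauss_tail_def cdf_def)
qed

lemma Phi_strict:
  assumes "a < b" shows "cdf NN a < cdf NN b"
proof -
  have le: "cdf NN a \<le> cdf NN b" using assms NN.cdf_nondecreasing by simp
  have "cdf NN b - cdf NN a = measure NN {a<..b}" using NN.cdf_diff_eq[OF assms] .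
  moreover have "measure NN {a<..b} \<noteq> 0"
  proof
    assume m0: "measure NN {a<..b} = 0"
    have "emeasure NN {a<..b} = 0"
      using m0 NN.emeasure_eq_measure by simp
    moreover have "emeasure NN {a<..b} = (\<integral>\<^sup>+ y. ennreal (std_normal_density y) * indicator {a<..b} y \<partial>lborel)"
      by (rule emeasure_density) auto
    ultimately have i0: "(\<integral>\<^sup>+ y. ennreal (std_normal_density y) * indicator {a<..b} y \<partial>lborel) = 0"
      by simp
    have "AE y in lborel. ennreal (std_normal_density y) * indicator {a<..b} y = 0"
      using nn_integral_0_iff_AE[of "\<lambda>y. ennreal (std_normal_density y) * indicator {a<..b} y" lborel] i0
      by simp
    then have "AE y in lborel. y \<notin> {a<..b}"
    proof (rule eventually_mono)
      fix y
      have "std_normal_density y \<noteq> 0" using normal_density_pos[of 1 0 y] by simp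
      then show "ennreal (std_normal_density y) * indicator {a<..b} y = 0 \<Longrightarrow> y \<notin> {a<..b}"
        by (auto simp: indicator_def)
    qed
    then have "emeasure lborel {a<..b} = 0"
      by (subst (asm) AE_iff_measurable[of "{a<..b}"]) auto
    then show False using assms by simp
  qed
  ultimately show ?thesis using le by simp
qed

lemma gauss_tail_inv_eq:
  assumes "0 < e" "e < 1"
  shows "gauss_tail (gauss_tail_inv e) = e"
proof -
  have "eventually (\<lambda>x. cdf NN x < 1 - e) at_bot"
    using order_tendstoD(2)[OF NN.cdf_lim_at_bot, of "1 - e"] assms by simp
  then obtain a where a: "cdf NN a < 1 - e" by (meson eventually_happens' trivial_limit_at_bot_linorder)
  have "eventually (\<lambda>x. 1 - e < cdf NN x) at_top"
    using order_tendstoD(1)[OF NN.cdf_lim_at_top_prob, of "1 - e"] assms by simp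
  then obtain b where b: "1 - e < cdf NN b" by (meson eventually_happens' trivial_limit_at_top_linorder)
  have ab: "a \<le> b"
  proof (rule ccontr)
    assume "\<not> a \<le> b"
    then have "cdf NN b \<le> cdf NN a" using NN.cdf_nondecreasing by simp
    then show False using a b by simp
  qed
  have "continuous_on {a..b} (cdf NN)" using Phi_cont by (simp add: continuous_at_imp_continuous_on)
  then obtain t where t: "cdf NN t = 1 - e" using IVT'[of "cdf NN" a "1 - e" b] a b ab by auto
  have ex: "\<exists>!t. gauss_tail t = e"
  proof
    show "gauss_tail t = e" using t by (simp add: gauss_tail_eq)
    fix s assume "gauss_tail s = e"
    then have s: "cdf NN s = cdf NN t" using t by (simp add: gauss_tail_eq)
    show "s = t"
    proof (rule ccontr)
      assume "s \<noteq> t"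
      then have "s < t \<or> t < s" by auto
      then show False using Phi_strict s by force
    qed
  qed
  show ?thesis unfolding gauss_tail_inv_def by (rule theI'[OF ex])
qed


lemma prod_list_nth: "prod_list (map P xs) = (\<Prod>i<length xs. P (xs ! i))"
proof (induct xs)
  case (Cons a xs)
  then show ?case by (simp add: prod.lessThan_Suc_shift del: prod.lessThan_Suc)
qed simp

context hyp begin

definition p0 where "p0 = embed_pmf P0"

lemma pmf_p0: "pmf p0 x = P0 x"
  unfolding p0_def
proof (rule pmf_embed_pmf)
  show "0 \<le> P0 x" for x using P0pos[of x] by simp
  have "(\<integral>\<^sup>+x. ennreal (P0 x) \<partial>count_space UNIV) = (\<Sum>x\<in>UNIV. ennreal (P0 x))"
    by (rule nn_integral_count_space_finite) simp
  also have "\<dots> = ennreal (\<Sum>x\<in>UNIV. P0 x)" using P0pos by (intro sum_ennreal) (simp add: less_imp_le)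
  finally show "(\<integral>\<^sup>+x. ennreal (P0 x) \<partial>count_space UNIV) = 1" using is_sum[OF P0dist] by simp
qed

definition MM where "MM = PiM (UNIV :: nat set) (\<lambda>_. measure_pmf p0)"

lemma MM_prob: "prob_space MM"
  unfolding MM_def by (rule prob_space_PiM) (rule measure_pmf.prob_space_axioms)

lemma space_MM: "space MM = UNIV"
  by (simp add: MM_def space_PiM PiE_UNIV_domain)

lemma MM_cyl:
  "measure MM {\<omega>. \<forall>i<length xs. \<omega> i = xs ! i} = prod_list (map P0 xs)"
proof -
  define n where "n = length xs"
  have eq: "{\<omega>. \<forall>i<n. \<omega> i = xs ! i} = prod_emb UNIV (\<lambda>_. measure_pmf p0) {..<n} (Pi\<^sub>E {..<n} (\<lambda>i. {xs ! i}))"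
    by (auto simp: prod_emb_def space_PiM PiE_iff)
  have "emeasure MM {\<omega>. \<forall>i<n. \<omega> i = xs ! i} = (\<Prod>i<n. emeasure (measure_pmf p0) {xs ! i})"
    unfolding eq MM_def
    by (rule emeasure_PiM_emb) (auto intro: measure_pmf.prob_space_axioms)
  also have "\<dots> = (\<Prod>i<n. ennreal (P0 (xs ! i)))" by (simp add: emeasure_pmf_single pmf_p0)
  also have "\<dots> = ennreal (\<Prod>i<n. P0 (xs ! i))" using P0pos by (intro prod_ennreal) (simp add: less_imp_le)
  finally have "measure MM {\<omega>. \<forall>i<n. \<omega> i = xs ! i} = (\<Prod>i<n. P0 (xs ! i))"
    by (simp add: measure_def prod_nonneg P0pos less_imp_le)
  then show ?thesis by (simp add: n_def prod_list_nth)
qed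

lemma MM_seq:
  "measure MM {\<omega> \<in> space MM. A (map \<omega> [0..<n])} = seq_prob P0 n A"
proof -
  interpret MMp: prob_space MM by (rule MM_prob)
  define L where "L = {xs. length xs = n \<and> A xs}"
  define C where "C xs = {\<omega>. \<forall>i<length xs. \<omega> i = xs ! i}" for xs :: "'a list"
  have fin: "finite L" unfolding L_def by (rule finite_subset[OF _ finite_lists_len[of n]]) auto
  have eq: "{\<omega> \<in> space MM. A (map \<omega> [0..<n])} = (\<Union>xs\<in>L. C xs)"
  proof safe
    fix \<omega> assume "\<omega> \<in> space MM" "A (map \<omega> [0..<n])"
    then show "\<omega> \<in> (\<Union>xs\<in>L. C xs)" by (auto simp: L_def C_def intro!: exI[of _ "map \<omega> [0..<n]"])
  next
    fix \<omega> xs assume "xs \<in> L" "\<omega> \<in> C xs"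
    then have "map \<omega> [0..<n] = xs" by (auto simp: L_def C_def intro: nth_equalityI)
    then show "A (map \<omega> [0..<n])" using \<open>xs \<in> L\<close> by (simp add: L_def)
  qed (simp add: space_MM)
  have sets: "C xs \<in> sets MM" for xs
  proof -
    have "C xs = prod_emb UNIV (\<lambda>_. measure_pmf p0) {..<length xs} (Pi\<^sub>E {..<length xs} (\<lambda>i. {xs ! i}))"
      by (auto simp: C_def prod_emb_def space_PiM PiE_iff)
    then show ?thesis unfolding MM_def by (auto intro!: sets_PiM_I)
  qed
  have disj: "disjoint_family_on C L"
    unfolding disjoint_family_on_def
  proof (intro ballI impI)
    fix xs ys assume "xs \<in> L" "ys \<in> L" "xs \<noteq> ys"
    then have "length xs = length ys" by (simp add: L_def)
    then obtain i where "i < length xs" "xs ! i \<noteq> ys ! i" using \<open>xs \<noteq> ys\<close> nth_equalityI by blast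
    then show "C xs \<inter> C ys = {}" using \<open>length xs = length ys\<close> by (auto simp: C_def)
  qed
  have "measure MM (\<Union>xs\<in>L. C xs) = (\<Sum>xs\<in>L. measure MM (C xs))"
    by (rule measure_finite_Union[OF fin _ disj]) (use sets in auto)
  also have "\<dots> = (\<Sum>xs\<in>L. prod_list (map P0 xs))" by (simp add: C_def MM_cyl)
  finally show ?thesis by (simp add: eq seq_prob_def L_def)
qed

end

context hyp begin

definition Xv where "Xv i \<omega> = f (\<omega> (i::nat)) - gam"

lemma integral_p0: "(\<integral>x. h x \<partial>measure_pmf p0) = (\<Sum>x\<in>UNIV. P0 x * h x)"
  by (subst integral_measure_pmf_real[of UNIV]) (auto simp: pmf_p0 mult.commute)

lemma comp_meas: "(\<lambda>\<omega>. \<omega> i) \<in> measurable MM (measure_pmf p0)"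
  by (simp only: MM_def) (rule measurable_component_singleton, simp)

lemma distr_comp: "distr MM (measure_pmf p0) (\<lambda>\<omega>. \<omega> i) = measure_pmf p0"
  unfolding MM_def by (rule distr_PiM_component) (auto intro: measure_pmf.prob_space_axioms)

lemma g_meas: "(\<lambda>a. h a :: real) \<in> borel_measurable (measure_pmf p0)"
  by simp

lemma Xv_meas: "Xv i \<in> borel_measurable MM"
proof -
  have "Xv i = (\<lambda>a. f a - gam) \<circ> (\<lambda>\<omega>. \<omega> i)" by (rule ext) (simp add: Xv_def)
  then show ?thesis using measurable_comp[OF comp_meas g_meas] by simp
qed

lemma S_upt: "S (map \<omega> [0..<n]) = (\<Sum>i<n. f (\<omega> i))"
  by (induct n) (simp_all add: S_def)

lemma clt_cdf:
  assumes Vp: "V > 0"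
  shows "(\<lambda>n. seq_prob P0 n (\<lambda>xs. (S xs - real n * gam) / sqrt (real n * V) \<le> y)) \<longlonglongrightarrow> cdf NN y"
proof -
  interpret MMp: prob_space MM by (rule MM_prob)
  have indep0: "MMp.indep_vars (\<lambda>_. measure_pmf p0) (\<lambda>i \<omega>. \<omega> i) UNIV"
  proof (subst MMp.indep_vars_iff_distr_eq_PiM)
    show "UNIV \<noteq> {}" by simp
    show "MMp.random_variable (measure_pmf p0) (\<lambda>\<omega>. \<omega> i)" for i :: nat by (rule comp_meas)
    have r: "(\<lambda>x. \<lambda>i\<in>UNIV. x i) = (\<lambda>x::nat \<Rightarrow> 'a. x)" by (auto simp: restrict_def)
    have "distr MM (Pi\<^sub>M UNIV (\<lambda>i. measure_pmf p0)) (\<lambda>x. \<lambda>i\<in>UNIV. x i) = distr MM MM (\<lambda>x. x)"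
      by (simp only: r) (simp add: MM_def)
    also have "\<dots> = MM" by simp
    also have "\<dots> = Pi\<^sub>M UNIV (\<lambda>i. distr MM (measure_pmf p0) (\<lambda>\<omega>. \<omega> i))"
      by (simp only: distr_comp) (simp add: MM_def)
    finally show "distr MM (Pi\<^sub>M UNIV (\<lambda>i. measure_pmf p0)) (\<lambda>x. \<lambda>i\<in>UNIV. x i) =
        Pi\<^sub>M UNIV (\<lambda>i. distr MM (measure_pmf p0) (\<lambda>\<omega>. \<omega> i))" .
  qed
  have indep: "MMp.indep_vars (\<lambda>_. borel) Xv UNIV"
  proof -
    have "MMp.indep_vars (\<lambda>_. borel) (\<lambda>i \<omega>. (\<lambda>a. f a - gam) (\<omega> i)) UNIV"
      by (rule MMp.indep_vars_compose2[OF indep0]) simp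
    then show ?thesis by (simp add: Xv_def[abs_def])
  qed
  define \<mu> where "\<mu> = distr (measure_pmf p0) borel (\<lambda>a. f a - gam)"
  have distrX: "distr MM borel (Xv n) = \<mu>" for n
  proof -
    have "distr MM borel (Xv n) = distr MM borel ((\<lambda>a. f a - gam) \<circ> (\<lambda>\<omega>. \<omega> n))"
      by (simp add: Xv_def[abs_def] o_def)
    also have "\<dots> = distr (distr MM (measure_pmf p0) (\<lambda>\<omega>. \<omega> n)) borel (\<lambda>a. f a - gam)"
      by (rule distr_distr[symmetric]) (auto intro: comp_meas simp del: measurable_pmf_measure2)
    finally show ?thesis by (simp add: distr_comp \<mu>_def)
  qed
  have intX: "MMp.expectation (\<lambda>\<omega>. h (Xv n \<omega>)) = (\<Sum>x\<in>UNIV. P0 x * h (f x - gam))" for h :: "real \<Rightarrow> real" and n :: nat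
  proof -
    have "MMp.expectation (\<lambda>\<omega>. h (Xv n \<omega>)) = MMp.expectation (\<lambda>\<omega>. (\<lambda>a. h (f a - gam)) (\<omega> n))"
      by (simp add: Xv_def)
    also have "\<dots> = (\<integral>a. h (f a - gam) \<partial>distr MM (measure_pmf p0) (\<lambda>\<omega>. \<omega> n))"
      by (rule integral_distr[symmetric]) (auto intro: comp_meas simp del: measurable_pmf_measure2)
    also have "\<dots> = (\<Sum>x\<in>UNIV. P0 x * h (f x - gam))" by (simp add: distr_comp integral_p0)
    finally show ?thesis .
  qed
  have sqint: "integrable MM (\<lambda>\<omega>. (Xv n \<omega>)\<^sup>2)" for n
  proof -
    have "integrable (distr MM (measure_pmf p0) (\<lambda>\<omega>. \<omega> n)) (\<lambda>a. (f a - gam)\<^sup>2)"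
      unfolding distr_comp by (rule integrable_measure_pmf_finite) simp
    then have "integrable MM (\<lambda>\<omega>. (\<lambda>a. (f a - gam)\<^sup>2) (\<omega> n))"
      by (subst (asm) integrable_distr_eq) (auto intro: comp_meas simp del: measurable_pmf_measure2)
    then show ?thesis by (simp add: Xv_def)
  qed
  have mean0: "MMp.expectation (Xv n) = 0" for n
    using intX[of "\<lambda>x. x" n] centered_mean[OF P0dist, of f] by (simp add: gam_def)
  have var: "MMp.variance (Xv n) = (sqrt V)\<^sup>2" for n
    using intX[of "\<lambda>x. x\<^sup>2" n] mean0[of n] Vp by (simp add: V_def)
  have sig: "sqrt V > 0" using Vp by simp
  have clt: "weak_conv_m (\<lambda>n. distr MM borel (\<lambda>x. (\<Sum>i<n. Xv i x) / sqrt (real n * (sqrt V)\<^sup>2))) NN"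
    by (rule MMp.central_limit_theorem_zero_mean[OF indep mean0 sig sqint var distrX])
  have cdfeq: "cdf (distr MM borel (\<lambda>x. (\<Sum>i<n. Xv i x) / sqrt (real n * (sqrt V)\<^sup>2))) y =
      seq_prob P0 n (\<lambda>xs. (S xs - real n * gam) / sqrt (real n * V) \<le> y)" for n
  proof -
    have m: "(\<lambda>x. (\<Sum>i<n. Xv i x) / sqrt (real n * (sqrt V)\<^sup>2)) \<in> borel_measurable MM"
      by (intro borel_measurable_divide borel_measurable_sum borel_measurable_const Xv_meas)
    have e: "(\<Sum>i<n. Xv i x) = S (map x [0..<n]) - real n * gam" for x
      by (simp add: Xv_def S_upt sum_subtractf)
    have "cdf (distr MM borel (\<lambda>x. (\<Sum>i<n. Xv i x) / sqrt (real n * (sqrt V)\<^sup>2))) y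
        = measure MM ((\<lambda>x. (\<Sum>i<n. Xv i x) / sqrt (real n * (sqrt V)\<^sup>2)) -` {..y} \<inter> space MM)"
      unfolding cdf_def by (rule measure_distr[OF m]) simp
    also have "(\<lambda>x. (\<Sum>i<n. Xv i x) / sqrt (real n * (sqrt V)\<^sup>2)) -` {..y} \<inter> space MM =
        {\<omega> \<in> space MM. (\<lambda>xs. (S xs - real n * gam) / sqrt (real n * V) \<le> y) (map \<omega> [0..<n])}"
      using Vp by (auto simp: e)
    also have "measure MM \<dots> = seq_prob P0 n (\<lambda>xs. (S xs - real n * gam) / sqrt (real n * V) \<le> y)"
      by (rule MM_seq)
    finally show ?thesis .
  qed
  have "(\<lambda>n. cdf (distr MM borel (\<lambda>x. (\<Sum>i<n. Xv i x) / sqrt (real n * (sqrt V)\<^sup>2))) y) \<longlonglongrightarrow> cdf NN y"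
    using clt Phi_cont[of y] unfolding weak_conv_m_def weak_conv_def by blast
  then show ?thesis by (simp only: cdfeq)
qed

end

context hyp begin

lemma gs_admissible:
  assumes Vp: "V > 0" and e0: "0 < \<epsilon>" and e1: "\<epsilon> < 1"
  shows "admissible P0 Ph0 Ph1 \<epsilon> (\<lambda>n. gam + sqrt (V / real n) * gauss_tail_inv \<epsilon>)"
  unfolding admissible_def
proof (rule ereal_le_from_above)
  fix e :: real assume e: "e > 0"
  define t where "t = gauss_tail_inv \<epsilon>"
  have tt: "1 - cdf NN t = \<epsilon>" using gauss_tail_inv_eq[OF e0 e1] by (simp add: t_def gauss_tail_eq)
  obtain d where d: "d > 0" "\<And>x. dist x t < d \<Longrightarrow> dist (cdf NN x) (cdf NN t) < e/2"
    using Phi_cont[of t] e unfolding continuous_at_eps_delta by (meson half_gt_zero)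
  define \<delta> where "\<delta> = d/2"
  have "dist (t - \<delta>) t < d" using d by (simp add: \<delta>_def dist_real_def)
  then have "\<bar>cdf NN (t - \<delta>) - cdf NN t\<bar> < e/2" using d(2) by (simp add: dist_real_def)
  then have Pd: "cdf NN t - e/2 < cdf NN (t - \<delta>)" by linarith
  have ev: "eventually (\<lambda>n. cdf NN t - e/2 < seq_prob P0 n (\<lambda>xs. (S xs - real n * gam) / sqrt (real n * V) \<le> t - \<delta>)) sequentially"
    by (rule order_tendstoD(1)[OF clt_cdf[OF Vp] Pd])
  show "limsup (\<lambda>n. ereal (eps0 P0 Ph0 Ph1 n (gam + sqrt (V / real n) * gauss_tail_inv \<epsilon>))) \<le> ereal (\<epsilon> + e)"
  proof (rule Limsup_bounded)
    show "eventually (\<lambda>n. ereal (eps0 P0 Ph0 Ph1 n (gam + sqrt (V / real n) * gauss_tail_inv \<epsilon>)) \<le> ereal (\<epsilon> + e)) sequentially"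
      using ev eventually_gt_at_top[of 0]
    proof eventually_elim
      case (elim n)
      have sq: "real n * sqrt (V / real n) = sqrt (real n * V)"
        using elim Vp by (simp add: real_sqrt_divide real_sqrt_mult field_simps)
      have sp: "0 < sqrt (real n * V)" using elim Vp by simp
      have "eps0 P0 Ph0 Ph1 n (gam + sqrt (V / real n) * t) = seq_prob P0 n (\<lambda>xs. real n * (gam + sqrt (V / real n) * t) \<le> S xs)"
        using elim by (simp add: eps0_eq)
      also have "\<dots> \<le> seq_prob P0 n (\<lambda>xs. \<not> (S xs - real n * gam) / sqrt (real n * V) \<le> t - \<delta>)"
      proof (rule seq_prob_mono)
        show "0 \<le> P0 x" for x by (rule is_nonneg[OF P0dist])
        fix xs assume "real n * (gam + sqrt (V / real n) * t) \<le> S xs"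
        then have "sqrt (real n * V) * t \<le> S xs - real n * gam" using sq by (simp add: algebra_simps)
        then have "t \<le> (S xs - real n * gam) / sqrt (real n * V)" using sp by (simp add: pos_le_divide_eq mult.commute)
        then show "\<not> (S xs - real n * gam) / sqrt (real n * V) \<le> t - \<delta>" using d by (simp add: \<delta>_def)
      qed
      also have "\<dots> = 1 - seq_prob P0 n (\<lambda>xs. (S xs - real n * gam) / sqrt (real n * V) \<le> t - \<delta>)"
        by (rule seq_prob_compl[OF P0dist])
      also have "\<dots> \<le> \<epsilon> + e" using elim(1) tt e by linarith
      finally show ?case by (simp add: t_def)
    qed
  qed
qed

lemma gs_exponent:
  assumes Vp: "V > 0" and e0: "0 < \<epsilon>" and e1: "\<epsilon> < 1"
  shows "exponent1 P1 Ph0 Ph1 (\<lambda>n. gam + sqrt (V / real n) * gauss_tail_inv \<epsilon>) = ereal K"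
proof (rule antisym)
  show "exponent1 P1 Ph0 Ph1 (\<lambda>n. gam + sqrt (V / real n) * gauss_tail_inv \<epsilon>) \<le> ereal K"
    by (rule converse[OF gs_admissible[OF assms] e1])
  have "(\<lambda>n. V / real n) \<longlonglongrightarrow> 0" by (rule lim_const_over_n)
  then have "(\<lambda>n. sqrt (V / real n)) \<longlonglongrightarrow> sqrt 0" by (rule tendsto_real_sqrt)
  then have "(\<lambda>n. sqrt (V / real n)) \<longlonglongrightarrow> 0" by simp
  then have lim: "(\<lambda>n. sqrt (V / real n) * gauss_tail_inv \<epsilon>) \<longlonglongrightarrow> 0"
    using tendsto_mult[OF _ tendsto_const[of "gauss_tail_inv \<epsilon>"]] by fastforce
  show "ereal K \<le> exponent1 P1 Ph0 Ph1 (\<lambda>n. gam + sqrt (V / real n) * gauss_tail_inv \<epsilon>)"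
  proof (rule exponent_lower)
    fix \<eta> :: real assume "\<eta> > 0"
    from order_tendstoD(2)[OF lim this]
    show "eventually (\<lambda>n. gam + sqrt (V / real n) * gauss_tail_inv \<epsilon> \<le> gam + \<eta>) sequentially"
      by eventually_elim simp
  qed
qed

lemma mism_var_eq: "mism_var P0 Ph0 Ph1 = V"
proof -
  have l: "ln (Ph0 x / Ph1 x) = - f x" for x
    using full_pos[OF G0, of x] full_pos[OF G1, of x] by (simp add: f_def ln_div)
  have m: "(\<Sum>x\<in>UNIV. P0 x * - f x) = - gam" by (simp add: gam_def sum_negf)
  show ?thesis unfolding mism_var_def Let_def l m V_def
    by (rule sum.cong) (auto simp: power2_eq_square algebra_simps)
qed

end

theorem theorem2:
  fixes P0 P1 Ph0 Ph1 :: "'a::finite \<Rightarrow> real" and \<epsilon> :: real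
  assumes "full_dist P0" and "full_dist P1" and "full_dist Ph0" and "full_dist Ph1"
    and "0 < \<epsilon>" and "\<epsilon> < 1/2"
  defines "\<gamma>s \<equiv> KL P0 Ph0 - KL P0 Ph1"
  defines "Qh1 \<equiv> {Q \<in> prob_simplex. KL Q Ph0 - KL Q Ph1 \<le> \<gamma>s}"
  shows "\<exists>Qm \<in> Qh1. (\<forall>Q \<in> Qh1. KL Qm P1 \<le> KL Q P1)
           \<and> stein_exp P0 P1 Ph0 Ph1 \<epsilon> = ereal (KL Qm P1)
           \<and> (mism_var P0 Ph0 Ph1 > 0 \<longrightarrow>
               (let gs = (\<lambda>n. \<gamma>s + sqrt (mism_var P0 Ph0 Ph1 / real n) * gauss_tail_inv \<epsilon>)
                in admissible P0 Ph0 Ph1 \<epsilon> gs \<and> exponent1 P1 Ph0 Ph1 gs = ereal (KL Qm P1)))"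
proof -
  interpret H: hyp P0 P1 Ph0 Ph1 using assms(1-4) by unfold_locales
  have g: "\<gamma>s = H.gam" by (simp add: \<gamma>s_def H.gam_eq)
  have e1: "\<epsilon> < 1" using assms(6) by simp
  have mem: "H.Qm \<in> Qh1"
    using H.Qm_stat H.Qm_full by (simp add: Qh1_def g prob_simplex_def full_dist_def)
  have min: "\<forall>Q \<in> Qh1. KL H.Qm P1 \<le> KL Q P1"
  proof
    fix Q assume "Q \<in> Qh1"
    then have Q: "is_dist Q" "KL Q Ph0 - KL Q Ph1 \<le> H.gam" by (auto simp: Qh1_def prob_simplex_def g)
    then have "(\<Sum>x\<in>UNIV. Q x * H.f x) \<le> H.gam" using H.stat_diff[of Q] is_nonneg[OF Q(1)] by simp
    then show "KL H.Qm P1 \<le> KL Q P1" by (rule H.Qm_min[OF Q(1)])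
  qed
  have st: "stein_exp P0 P1 Ph0 Ph1 \<epsilon> = ereal (KL H.Qm P1)"
    using H.stein_eq[OF assms(5) e1] by (simp add: H.K_def)
  have last: "mism_var P0 Ph0 Ph1 > 0 \<longrightarrow>
               (let gs = (\<lambda>n. \<gamma>s + sqrt (mism_var P0 Ph0 Ph1 / real n) * gauss_tail_inv \<epsilon>)
                in admissible P0 Ph0 Ph1 \<epsilon> gs \<and> exponent1 P1 Ph0 Ph1 gs = ereal (KL H.Qm P1))"
    using H.gs_admissible[OF _ assms(5) e1] H.gs_exponent[OF _ assms(5) e1]
    by (simp add: H.mism_var_eq g H.K_def Let_def)
  show ?thesis using mem min st last by blast
qed

end
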